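(* Let $(L,L_0)$ be a nonlinear primitive Lie superalgebra. Then $L$ is a semisimple Lie superalgebra and $L$ is not the direct sum of two nonzero ideals.
   Context: All Lie superalgebras are finite-dimensional over $\mathbb{C}$. A pair $(L,L_0)$, with $L=L_{\bar 0}\oplus L_{\bar 1}$ a Lie superalgebra and $L_0$ a subalgebra, is called transitive if $L_0$ contains no nonzero ideal of $L$. A transitive pair is nonlinear primitive if (a) $L_0$ is a maximal subalgebra of $L$, and (b) the subspace $L_1=\{x\in L_0 : [x,L]\subset L_0\}$ (the kernel of the isotropy representation of $L_0$ on $L/L_0$) is nonzero. A Lie superalgebra is semisimple if its radical is zero, equivalently if it contains no nonzero abelian ideal. *)

theory Defs
  imports Complex_Main
begin

text \<open>The underlying space is the whole type 'v (an abelian group) with a complex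
  scalar multiplication sc; the grading is given by the even part E and the
  odd part Od (subspaces with L = E (+) Od); br is the super bracket.\<close>

definition hom_part :: "'v set \<Rightarrow> 'v set \<Rightarrow> bool \<Rightarrow> 'v set" where
  "hom_part E Od p = (if p then Od else E)"

definition ssign :: "bool \<Rightarrow> bool \<Rightarrow> 'v::ab_group_add \<Rightarrow> 'v" where
  "ssign p q v = (if p \<and> q then - v else v)"

definition lie_superalgebra ::
  "(complex \<Rightarrow> 'v::ab_group_add \<Rightarrow> 'v) \<Rightarrow> 'v set \<Rightarrow> 'v set \<Rightarrow> ('v \<Rightarrow> 'v \<Rightarrow> 'v) \<Rightarrow> bool" where
  "lie_superalgebra sc E Od br \<longleftrightarrow>
     vector_space sc \<and>
     (\<exists>B. finite B \<and> module.span sc B = UNIV) \<and>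
     module.subspace sc E \<and> module.subspace sc Od \<and>
     E \<inter> Od = {0} \<and> (\<forall>v. \<exists>x\<in>E. \<exists>y\<in>Od. v = x + y) \<and>
     (\<forall>x y z. br (x + y) z = br x z + br y z) \<and>
     (\<forall>x y z. br x (y + z) = br x y + br x z) \<and>
     (\<forall>a x y. br (sc a x) y = sc a (br x y)) \<and>
     (\<forall>a x y. br x (sc a y) = sc a (br x y)) \<and>
     (\<forall>p q x y. x \<in> hom_part E Od p \<longrightarrow> y \<in> hom_part E Od q \<longrightarrow>
        br x y \<in> hom_part E Od (p \<noteq> q)) \<and>
     (\<forall>p q x y. x \<in> hom_part E Od p \<longrightarrow> y \<in> hom_part E Od q \<longrightarrow>
        br x y = - ssign p q (br y x)) \<and>
     (\<forall>p q x y z. x \<in> hom_part E Od p \<longrightarrow> y \<in> hom_part E Od q \<longrightarrow>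
        br x (br y z) = br (br x y) z + ssign p q (br y (br x z)))"

definition graded_subspace ::
  "(complex \<Rightarrow> 'v::ab_group_add \<Rightarrow> 'v) \<Rightarrow> 'v set \<Rightarrow> 'v set \<Rightarrow> 'v set \<Rightarrow> bool" where
  "graded_subspace sc E Od S \<longleftrightarrow> module.subspace sc S \<and>
     (\<forall>v\<in>S. \<exists>x\<in>E \<inter> S. \<exists>y\<in>Od \<inter> S. v = x + y)"

definition subalgebra ::
  "(complex \<Rightarrow> 'v::ab_group_add \<Rightarrow> 'v) \<Rightarrow> 'v set \<Rightarrow> 'v set \<Rightarrow> ('v \<Rightarrow> 'v \<Rightarrow> 'v) \<Rightarrow> 'v set \<Rightarrow> bool" where
  "subalgebra sc E Od br S \<longleftrightarrow> graded_subspace sc E Od S \<and>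
     (\<forall>x\<in>S. \<forall>y\<in>S. br x y \<in> S)"

definition super_ideal ::
  "(complex \<Rightarrow> 'v::ab_group_add \<Rightarrow> 'v) \<Rightarrow> 'v set \<Rightarrow> 'v set \<Rightarrow> ('v \<Rightarrow> 'v \<Rightarrow> 'v) \<Rightarrow> 'v set \<Rightarrow> bool" where
  "super_ideal sc E Od br I \<longleftrightarrow> graded_subspace sc E Od I \<and>
     (\<forall>x. \<forall>y\<in>I. br x y \<in> I)"

definition transitive_pair ::
  "(complex \<Rightarrow> 'v::ab_group_add \<Rightarrow> 'v) \<Rightarrow> 'v set \<Rightarrow> 'v set \<Rightarrow> ('v \<Rightarrow> 'v \<Rightarrow> 'v) \<Rightarrow> 'v set \<Rightarrow> bool" where
  "transitive_pair sc E Od br L0 \<longleftrightarrow> subalgebra sc E Od br L0 \<and>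
     (\<forall>I. super_ideal sc E Od br I \<and> I \<subseteq> L0 \<longrightarrow> I = {0})"

definition maximal_subalgebra ::
  "(complex \<Rightarrow> 'v::ab_group_add \<Rightarrow> 'v) \<Rightarrow> 'v set \<Rightarrow> 'v set \<Rightarrow> ('v \<Rightarrow> 'v \<Rightarrow> 'v) \<Rightarrow> 'v set \<Rightarrow> bool" where
  "maximal_subalgebra sc E Od br S \<longleftrightarrow> subalgebra sc E Od br S \<and> S \<noteq> UNIV \<and>
     (\<forall>T. subalgebra sc E Od br T \<and> S \<subseteq> T \<longrightarrow> T = S \<or> T = UNIV)"

text \<open>kernel of the isotropy representation of L0 on L/L0\<close>
definition isotropy_kernel :: "('v \<Rightarrow> 'v \<Rightarrow> 'v) \<Rightarrow> 'v set \<Rightarrow> 'v set" where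
  "isotropy_kernel br L0 = {x \<in> L0. \<forall>y. br x y \<in> L0}"

definition nonlinear_primitive ::
  "(complex \<Rightarrow> 'v::ab_group_add \<Rightarrow> 'v) \<Rightarrow> 'v set \<Rightarrow> 'v set \<Rightarrow> ('v \<Rightarrow> 'v \<Rightarrow> 'v) \<Rightarrow> 'v set \<Rightarrow> bool" where
  "nonlinear_primitive sc E Od br L0 \<longleftrightarrow> transitive_pair sc E Od br L0 \<and>
     maximal_subalgebra sc E Od br L0 \<and> isotropy_kernel br L0 \<noteq> {0}"

definition derived ::
  "(complex \<Rightarrow> 'v::ab_group_add \<Rightarrow> 'v) \<Rightarrow> ('v \<Rightarrow> 'v \<Rightarrow> 'v) \<Rightarrow> 'v set \<Rightarrow> 'v set" where
  "derived sc br I = module.span sc {br x y | x y. x \<in> I \<and> y \<in> I}"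

definition solvable ::
  "(complex \<Rightarrow> 'v::ab_group_add \<Rightarrow> 'v) \<Rightarrow> ('v \<Rightarrow> 'v \<Rightarrow> 'v) \<Rightarrow> 'v set \<Rightarrow> bool" where
  "solvable sc br I \<longleftrightarrow> (\<exists>n. (derived sc br ^^ n) I = {0})"

text \<open>semisimple: the radical (largest solvable ideal) is zero, i.e. every
  solvable ideal is zero\<close>
definition semisimple ::
  "(complex \<Rightarrow> 'v::ab_group_add \<Rightarrow> 'v) \<Rightarrow> 'v set \<Rightarrow> 'v set \<Rightarrow> ('v \<Rightarrow> 'v \<Rightarrow> 'v) \<Rightarrow> bool" where
  "semisimple sc E Od br \<longleftrightarrow>
     (\<forall>I. super_ideal sc E Od br I \<and> solvable sc br I \<longrightarrow> I = {0})"

end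

theory Submission
  imports Defs
begin

locale lsa = module sc for sc :: "complex \<Rightarrow> 'v::ab_group_add \<Rightarrow> 'v" +
  fixes E Od :: "'v set" and br :: "'v \<Rightarrow> 'v \<Rightarrow> 'v" and L0 :: "'v set"
  assumes subE: "subspace E" and subO: "subspace Od" and EO: "E \<inter> Od = {0}"
  and dec: "\<And>v. \<exists>x\<in>E. \<exists>y\<in>Od. v = x + y"
  and addl: "\<And>x y z. br (x + y) z = br x z + br y z"
  and addr: "\<And>x y z. br x (y + z) = br x y + br x z"
  and scl: "\<And>a x y. br (sc a x) y = sc a (br x y)"
  and scr: "\<And>a x y. br x (sc a y) = sc a (br x y)"
  and par: "\<And>p q x y. x \<in> hom_part E Od p \<Longrightarrow> y \<in> hom_part E Od q \<Longrightarrow>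
        br x y \<in> hom_part E Od (p \<noteq> q)"
  and anti: "\<And>p q x y. x \<in> hom_part E Od p \<Longrightarrow> y \<in> hom_part E Od q \<Longrightarrow>
        br x y = - ssign p q (br y x)"
  and jac: "\<And>p q x y z. x \<in> hom_part E Od p \<Longrightarrow> y \<in> hom_part E Od q \<Longrightarrow>
        br x (br y z) = br (br x y) z + ssign p q (br y (br x z))"
  and L0sub: "subalgebra sc E Od br L0"
  and trans: "\<And>I. super_ideal sc E Od br I \<Longrightarrow> I \<subseteq> L0 \<Longrightarrow> I = {0}"
  and maxi: "\<And>T. subalgebra sc E Od br T \<Longrightarrow> L0 \<subseteq> T \<Longrightarrow> T = L0 \<or> T = UNIV"
  and L1: "isotropy_kernel br L0 \<noteq> {0}"
begin

lemma hp[simp]: "hom_part E Od False = E" "hom_part E Od True = Od"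
  by (simp_all add: hom_part_def)

lemma ssign_in: "subspace S \<Longrightarrow> v \<in> S \<Longrightarrow> ssign p q v \<in> S"
  by (simp add: ssign_def subspace_neg)

lemma ssign0[simp]: "ssign p q (0::'v) = 0"
  by (simp add: ssign_def)

lemma br0l[simp]: "br 0 y = 0"
proof -
  have "br (0+0) y = br 0 y + br 0 y" by (rule addl)
  thus ?thesis by simp
qed

lemma br0r[simp]: "br x 0 = 0"
proof -
  have "br x (0+0) = br x 0 + br x 0" by (rule addr)
  thus ?thesis by simp
qed

lemma br4: "br (x0+x1) (y0+y1) = br x0 y0 + br x0 y1 + br x1 y0 + br x1 y1"
  by (simp add: addl addr add.assoc)

lemma uniq:
  assumes "a \<in> E" "b \<in> Od" "a' \<in> E" "b' \<in> Od" "a + b = a' + b'"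
  shows "a = a' \<and> b = b'"
proof -
  have "a - a' = b' - b" using assms(5) by (simp add: algebra_simps)
  moreover have "a - a' \<in> E" using assms subE subspace_diff by blast
  moreover have "b' - b \<in> Od" using assms subO subspace_diff by blast
  ultimately have "a - a' \<in> E \<inter> Od" by simp
  then have "a - a' = 0" using EO by blast
  then show ?thesis using assms(5) by simp
qed

lemma zero_split: "a \<in> E \<Longrightarrow> b \<in> Od \<Longrightarrow> a + b = 0 \<Longrightarrow> a = 0 \<and> b = 0"
  using uniq[of a b 0 0] subE subO subspace_0 by auto

lemma ideal_dec:
  assumes "super_ideal sc E Od br I" "v \<in> I"
  shows "\<exists>x y. x \<in> E \<and> x \<in> I \<and> y \<in> Od \<and> y \<in> I \<and> v = x + y"
  using assms unfolding super_ideal_def graded_subspace_def by blast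

lemma ideal_sub: "super_ideal sc E Od br I \<Longrightarrow> subspace I"
  unfolding super_ideal_def graded_subspace_def by blast

lemma ideal_right: "super_ideal sc E Od br I \<Longrightarrow> y \<in> I \<Longrightarrow> br x y \<in> I"
  unfolding super_ideal_def by blast

lemma left_hom:
  assumes "super_ideal sc E Od br A" "a \<in> A" "a \<in> hom_part E Od p" "z \<in> hom_part E Od q"
  shows "br a z \<in> A"
proof -
  have "br a z = - ssign p q (br z a)" using anti assms(3,4) by blast
  moreover have "br z a \<in> A" using ideal_right assms by blast
  ultimately show ?thesis using ideal_sub[OF assms(1)] ssign_in subspace_neg by metis
qed

lemma ideal_left:
  assumes "super_ideal sc E Od br A" "a \<in> A"
  shows "br a z \<in> A"
proof -
  obtain a0 a1 where a: "a0 \<in> E" "a0 \<in> A" "a1 \<in> Od" "a1 \<in> A" "a = a0 + a1"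
    using ideal_dec assms by blast
  obtain z0 z1 where z: "z0 \<in> E" "z1 \<in> Od" "z = z0 + z1" using dec by blast
  have S: "subspace A" using ideal_sub assms by blast
  have "br a0 z0 \<in> A" using left_hom[OF assms(1), of a0 False z0 False] a z by simp
  moreover have "br a0 z1 \<in> A" using left_hom[OF assms(1), of a0 False z1 True] a z by simp
  moreover have "br a1 z0 \<in> A" using left_hom[OF assms(1), of a1 True z0 False] a z by simp
  moreover have "br a1 z1 \<in> A" using left_hom[OF assms(1), of a1 True z1 True] a z by simp
  ultimately show ?thesis unfolding a(5) z(3) br4 using S subspace_add by metis
qed

lemma L0_sub: "subspace L0"
  using L0sub unfolding subalgebra_def graded_subspace_def by blast

lemma L0_dec: "v \<in> L0 \<Longrightarrow> \<exists>x y. x \<in> E \<and> x \<in> L0 \<and> y \<in> Od \<and> y \<in> L0 \<and> v = x + y"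
  using L0sub unfolding subalgebra_def graded_subspace_def by blast

lemma L0_br: "x \<in> L0 \<Longrightarrow> y \<in> L0 \<Longrightarrow> br x y \<in> L0"
  using L0sub unfolding subalgebra_def by blast

lemma sum_all:
  assumes B: "super_ideal sc E Od br B" "B \<noteq> {0}"
  shows "\<exists>l\<in>L0. \<exists>b\<in>B. z = l + b"
proof -
  define S where "S = {l + b | l b. l \<in> L0 \<and> b \<in> B}"
  have SB: "subspace B" using ideal_sub B by blast
  have subS: "subspace S"
  proof (rule subspaceI)
    show "0 \<in> S" unfolding S_def using subspace_0[OF L0_sub] subspace_0[OF SB] by force
  next
    fix x y assume "x \<in> S" "y \<in> S"
    then obtain l b l' b' where "l \<in> L0" "b \<in> B" "l' \<in> L0" "b' \<in> B" "x = l + b" "y = l' + b'"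
      unfolding S_def by blast
    moreover have "x + y = (l + l') + (b + b')" using calculation by (simp add: algebra_simps)
    ultimately show "x + y \<in> S" unfolding S_def
      using subspace_add[OF L0_sub] subspace_add[OF SB] by blast
  next
    fix c x assume "x \<in> S"
    then obtain l b where "l \<in> L0" "b \<in> B" "x = l + b" unfolding S_def by blast
    moreover have "sc c x = sc c l + sc c b" using calculation by (simp add: scale_right_distrib)
    ultimately show "sc c x \<in> S" unfolding S_def
      using subspace_scale[OF L0_sub] subspace_scale[OF SB] by blast
  qed
  have "subalgebra sc E Od br S"
    unfolding subalgebra_def graded_subspace_def
  proof (intro conjI ballI)
    show "subspace S" by (rule subS)
  next
    fix v assume "v \<in> S"
    then obtain l b where lb: "l \<in> L0" "b \<in> B" "v = l + b" unfolding S_def by blast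
    obtain l0 l1 where l: "l0 \<in> E" "l0 \<in> L0" "l1 \<in> Od" "l1 \<in> L0" "l = l0 + l1"
      using L0_dec lb by blast
    obtain b0 b1 where b: "b0 \<in> E" "b0 \<in> B" "b1 \<in> Od" "b1 \<in> B" "b = b0 + b1"
      using ideal_dec B lb by blast
    have "v = (l0 + b0) + (l1 + b1)" using lb l b by (simp add: algebra_simps)
    moreover have "l0 + b0 \<in> E \<inter> S" using l b subspace_add[OF subE] unfolding S_def by blast
    moreover have "l1 + b1 \<in> Od \<inter> S" using l b subspace_add[OF subO] unfolding S_def by blast
    ultimately show "\<exists>x\<in>E \<inter> S. \<exists>y\<in>Od \<inter> S. v = x + y" by blast
  next
    fix x y assume "x \<in> S" "y \<in> S"
    then obtain l b l' b' where lb: "l \<in> L0" "b \<in> B" "l' \<in> L0" "b' \<in> B" "x = l + b" "y = l' + b'"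
      unfolding S_def by blast
    have "br x y = br l l' + (br l b' + br b l' + br b b')"
      unfolding lb br4 by (simp add: add.assoc)
    moreover have "br l l' \<in> L0" using L0_br lb by blast
    moreover have "br l b' + br b l' + br b b' \<in> B"
      using ideal_right[OF B(1)] ideal_left[OF B(1)] lb subspace_add[OF SB] by metis
    ultimately show "br x y \<in> S" unfolding S_def by blast
  qed
  moreover have "L0 \<subseteq> S" unfolding S_def using subspace_0[OF SB] by force
  ultimately have "S = L0 \<or> S = UNIV" using maxi by blast
  moreover have "\<not> B \<subseteq> L0" using trans B by blast
  then obtain b where "b \<in> B" "b \<notin> L0" by blast
  moreover have "b \<in> S" unfolding S_def using \<open>b \<in> B\<close> subspace_0[OF L0_sub] by force
  ultimately have "S = UNIV" by blast
  then show ?thesis unfolding S_def by blast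
qed

lemma key:
  assumes A: "super_ideal sc E Od br A" "A \<noteq> {0}"
  shows "A \<inter> L0 \<noteq> {0}"
proof
  assume AL: "A \<inter> L0 = {0}"
  have SA: "subspace A" using ideal_sub A by blast
  define Z where "Z = {x \<in> L0. \<forall>a\<in>A. br x a = 0}"
  have hc: "x0 \<in> Z \<and> x1 \<in> Z" if hx: "x0 + x1 \<in> Z" "x0 \<in> E" "x0 \<in> L0" "x1 \<in> Od" "x1 \<in> L0" for x0 x1
  proof -
    have c: "br x0 a = 0 \<and> br x1 a = 0" if "a \<in> A" for a
    proof -
      obtain a0 a1 where a: "a0 \<in> E" "a0 \<in> A" "a1 \<in> Od" "a1 \<in> A" "a = a0 + a1"
        using ideal_dec A \<open>a \<in> A\<close> by blast
      have "br x0 a0 + br x1 a0 = 0" using \<open>x0 + x1 \<in> Z\<close> a unfolding Z_def by (simp add: addl)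
      moreover have "br x0 a0 \<in> E" using par[of x0 False a0 False] hx a by simp
      moreover have "br x1 a0 \<in> Od" using par[of x1 True a0 False] hx a by simp
      ultimately have 0: "br x0 a0 = 0 \<and> br x1 a0 = 0" using zero_split by blast
      have "br x1 a1 + br x0 a1 = 0" using \<open>x0 + x1 \<in> Z\<close> a unfolding Z_def by (simp add: addl add.commute)
      moreover have "br x0 a1 \<in> Od" using par[of x0 False a1 True] hx a by simp
      moreover have "br x1 a1 \<in> E" using par[of x1 True a1 True] hx a by simp
      ultimately have 1: "br x0 a1 = 0 \<and> br x1 a1 = 0" using zero_split by blast
      show ?thesis using 0 1 a(5) by (simp add: addr)
    qed
    then show ?thesis unfolding Z_def using that by blast
  qed
  have zdec: "\<exists>x0 x1. x0 \<in> E \<and> x0 \<in> Z \<and> x1 \<in> Od \<and> x1 \<in> Z \<and> x = x0 + x1" if hz: "x \<in> Z" for x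
  proof -
    obtain x0 x1 where "x0 \<in> E" "x0 \<in> L0" "x1 \<in> Od" "x1 \<in> L0" "x = x0 + x1"
      using L0_dec hz unfolding Z_def by blast
    then show ?thesis using hc hz by blast
  qed
  have subZ: "subspace Z"
  proof (rule subspaceI)
    show "0 \<in> Z" unfolding Z_def using subspace_0[OF L0_sub] by simp
  next
    fix x y assume "x \<in> Z" "y \<in> Z" then show "x + y \<in> Z"
      unfolding Z_def using subspace_add[OF L0_sub] by (simp add: addl)
  next
    fix c x assume "x \<in> Z" then show "sc c x \<in> Z"
      unfolding Z_def using subspace_scale[OF L0_sub] by (simp add: scl)
  qed
  have homz: "br l x \<in> Z" if hlx: "l \<in> L0" "x \<in> Z" for l x
  proof -
    have one: "br (br lp xq) a = 0" if "lp \<in> hom_part E Od p" "xq \<in> hom_part E Od q" "xq \<in> Z" "a \<in> A"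
      for lp xq p q a
    proof -
      have "br lp (br xq a) = br (br lp xq) a + ssign p q (br xq (br lp a))"
        using jac that by blast
      moreover have "br xq a = 0" using that unfolding Z_def by blast
      moreover have "br lp a \<in> A" using ideal_right A that by blast
      then have "br xq (br lp a) = 0" using that unfolding Z_def by blast
      ultimately show ?thesis by simp
    qed
    obtain l0 l1 where l: "l0 \<in> E" "l1 \<in> Od" "l = l0 + l1" using L0_dec hlx by blast
    obtain x0 x1 where x: "x0 \<in> E" "x0 \<in> Z" "x1 \<in> Od" "x1 \<in> Z" "x = x0 + x1" using zdec hlx by blast
    have "br (br l x) a = 0" if "a \<in> A" for a
      unfolding l(3) x(5) br4 addl
      using one[of l0 False x0 False a] one[of l0 False x1 True a]
        one[of l1 True x0 False a] one[of l1 True x1 True a] l x that by (simp add: addr addl)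
    moreover have "br l x \<in> L0" using L0_br hlx unfolding Z_def by blast
    ultimately show ?thesis unfolding Z_def by blast
  qed
  have "super_ideal sc E Od br Z"
    unfolding super_ideal_def graded_subspace_def
  proof (intro conjI allI ballI)
    show "subspace Z" by (rule subZ)
  next
    fix v assume "v \<in> Z" then show "\<exists>x\<in>E \<inter> Z. \<exists>y\<in>Od \<inter> Z. v = x + y" using zdec by blast
  next
    fix z x assume "x \<in> Z"
    obtain l a' where la: "l \<in> L0" "a' \<in> A" "z = l + a'" using sum_all A by blast
    obtain x0 x1 where x: "x0 \<in> E" "x0 \<in> Z" "x1 \<in> Od" "x1 \<in> Z" "x = x0 + x1"
      using zdec \<open>x \<in> Z\<close> by blast
    obtain a0 a1 where a: "a0 \<in> E" "a0 \<in> A" "a1 \<in> Od" "a1 \<in> A" "a' = a0 + a1"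
      using ideal_dec A la by blast
    have az: "br aq xp = 0" if "aq \<in> hom_part E Od q" "aq \<in> A" "xp \<in> hom_part E Od p" "xp \<in> Z"
      for aq xp p q
    proof -
      have "br aq xp = - ssign q p (br xp aq)" using anti that by blast
      moreover have "br xp aq = 0" using that unfolding Z_def by blast
      ultimately show ?thesis by simp
    qed
    have "br a' x = 0" unfolding a(5) x(5) br4
      using az[of a0 False x0 False] az[of a0 False x1 True] az[of a1 True x0 False]
        az[of a1 True x1 True] a x by simp
    then have "br z x = br l x" unfolding la(3) by (simp add: addl)
    then show "br z x \<in> Z" using homz la \<open>x \<in> Z\<close> by simp
  qed
  moreover have "Z \<subseteq> L0" unfolding Z_def by blast
  ultimately have Z0: "Z = {0}" using trans by blast
  have "isotropy_kernel br L0 \<subseteq> Z"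
  proof
    fix x assume x: "x \<in> isotropy_kernel br L0"
    have "br x a = 0" if "a \<in> A" for a
    proof -
      have "br x a \<in> L0" using x unfolding isotropy_kernel_def by blast
      moreover have "br x a \<in> A" using ideal_right A that by blast
      ultimately show ?thesis using AL by blast
    qed
    then show "x \<in> Z" using x unfolding Z_def isotropy_kernel_def by blast
  qed
  moreover have "0 \<in> isotropy_kernel br L0"
    unfolding isotropy_kernel_def using subspace_0[OF L0_sub] by simp
  ultimately show False using Z0 L1 by blast
qed

lemma lemma2:
  assumes A: "super_ideal sc E Od br A" and B: "super_ideal sc E Od br B" "B \<noteq> {0}"
    and comm: "\<And>a b. a \<in> A \<Longrightarrow> b \<in> B \<Longrightarrow> br b a = 0"
  shows "A = {0}"
proof (rule ccontr)
  assume nz: "A \<noteq> {0}"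
  define C where "C = A \<inter> L0"
  have SA: "subspace A" using ideal_sub A by blast
  have "super_ideal sc E Od br C"
    unfolding super_ideal_def graded_subspace_def
  proof (intro conjI allI ballI)
    show "subspace C" unfolding C_def using SA L0_sub subspace_inter by blast
  next
    fix v assume v: "v \<in> C"
    obtain x y where xy: "x \<in> E" "x \<in> A" "y \<in> Od" "y \<in> A" "v = x + y"
      using ideal_dec A v unfolding C_def by blast
    obtain x' y' where xy': "x' \<in> E" "x' \<in> L0" "y' \<in> Od" "y' \<in> L0" "v = x' + y'"
      using L0_dec v unfolding C_def by blast
    have "x = x' \<and> y = y'" using uniq xy xy' by metis
    then show "\<exists>x\<in>E \<inter> C. \<exists>y\<in>Od \<inter> C. v = x + y" using xy xy' unfolding C_def by blast
  next
    fix z c assume c: "c \<in> C"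
    obtain l b where lb: "l \<in> L0" "b \<in> B" "z = l + b" using sum_all B by blast
    have "br z c = br l c" unfolding lb(3) addl using comm lb c unfolding C_def by simp
    moreover have "br l c \<in> A" using ideal_right A c unfolding C_def by blast
    moreover have "br l c \<in> L0" using L0_br lb c unfolding C_def by blast
    ultimately show "br z c \<in> C" unfolding C_def by simp
  qed
  then have "C = {0}" using trans unfolding C_def by blast
  then show False using key[OF A nz] unfolding C_def by blast
qed

lemma derived_ideal:
  assumes I: "super_ideal sc E Od br I"
  shows "super_ideal sc E Od br (derived sc br I)"
proof -
  define G where "G = {br x y | x y. x \<in> I \<and> y \<in> I}"
  have D: "derived sc br I = span G" unfolding derived_def G_def by simp
  have GD: "br x y \<in> span G" if "x \<in> I" "y \<in> I" for x y
  proof -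
    have "br x y \<in> G" using that unfolding G_def by blast
    then show ?thesis by (rule span_base)
  qed
  have H: "br z (br x y) \<in> span G"
    if h: "x \<in> hom_part E Od p" "x \<in> I" "y \<in> hom_part E Od q" "y \<in> I" "z \<in> hom_part E Od r"
    for x y z p q r
  proof -
    have w: "br x y \<in> hom_part E Od (p \<noteq> q)" by (rule par[OF h(1) h(3)])
    have "br z (br x y) = - ssign r (p \<noteq> q) (br (br x y) z)" by (rule anti[OF h(5) w])
    moreover have "br (br x y) z = br x (br y z) - ssign p q (br y (br x z))"
      using jac[OF h(1) h(3), of z] by (simp add: algebra_simps)
    moreover have "br x (br y z) \<in> span G" by (rule GD[OF h(2) ideal_left[OF I h(4)]])
    moreover have "br y (br x z) \<in> span G" by (rule GD[OF h(4) ideal_left[OF I h(2)]])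
    ultimately show ?thesis using ssign_in[OF subspace_span] subspace_neg[OF subspace_span]
        subspace_diff[OF subspace_span] by metis
  qed
  have ideal: "br z w \<in> span G" if "w \<in> span G" for z w
    using that
  proof (induction rule: span_induct)
    case base
    show ?case
    proof (rule subspaceI)
      show "0 \<in> {w. br z w \<in> span G}" by (simp add: span_zero)
    next
      fix x y assume "x \<in> {w. br z w \<in> span G}" "y \<in> {w. br z w \<in> span G}"
      then show "x + y \<in> {w. br z w \<in> span G}" by (simp add: addr span_add)
    next
      fix c x assume "x \<in> {w. br z w \<in> span G}"
      then show "sc c x \<in> {w. br z w \<in> span G}" by (simp add: scr span_scale)
    qed
  next
    case (step g)
    then obtain x y where xy: "x \<in> I" "y \<in> I" "g = br x y" unfolding G_def by blast
    obtain x0 x1 where x: "x0 \<in> E" "x0 \<in> I" "x1 \<in> Od" "x1 \<in> I" "x = x0 + x1"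
      using ideal_dec I xy by blast
    obtain y0 y1 where y: "y0 \<in> E" "y0 \<in> I" "y1 \<in> Od" "y1 \<in> I" "y = y0 + y1"
      using ideal_dec I xy by blast
    obtain z0 z1 where z: "z0 \<in> E" "z1 \<in> Od" "z = z0 + z1" using dec by blast
    have "br z0 (br x0 y0) \<in> span G" using H[of x0 False y0 False z0 False] x y z by simp
    moreover have "br z0 (br x0 y1) \<in> span G" using H[of x0 False y1 True z0 False] x y z by simp
    moreover have "br z0 (br x1 y0) \<in> span G" using H[of x1 True y0 False z0 False] x y z by simp
    moreover have "br z0 (br x1 y1) \<in> span G" using H[of x1 True y1 True z0 False] x y z by simp
    moreover have "br z1 (br x0 y0) \<in> span G" using H[of x0 False y0 False z1 True] x y z by simp
    moreover have "br z1 (br x0 y1) \<in> span G" using H[of x0 False y1 True z1 True] x y z by simp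
    moreover have "br z1 (br x1 y0) \<in> span G" using H[of x1 True y0 False z1 True] x y z by simp
    moreover have "br z1 (br x1 y1) \<in> span G" using H[of x1 True y1 True z1 True] x y z by simp
    ultimately show ?case unfolding xy(3) x(5) y(5) z(3) by (simp add: addl addr span_add)
  qed
  define P where "P = {v. \<exists>a\<in>E \<inter> span G. \<exists>b\<in>Od \<inter> span G. v = a + b}"
  have "span G \<subseteq> P"
  proof (rule span_minimal)
    show "G \<subseteq> P"
    proof
      fix g assume "g \<in> G"
      then obtain x y where xy: "x \<in> I" "y \<in> I" "g = br x y" unfolding G_def by blast
      obtain x0 x1 where x: "x0 \<in> E" "x0 \<in> I" "x1 \<in> Od" "x1 \<in> I" "x = x0 + x1"
        using ideal_dec I xy by blast
      obtain y0 y1 where y: "y0 \<in> E" "y0 \<in> I" "y1 \<in> Od" "y1 \<in> I" "y = y0 + y1"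
        using ideal_dec I xy by blast
      have "g = (br x0 y0 + br x1 y1) + (br x0 y1 + br x1 y0)"
        unfolding xy(3) x(5) y(5) br4 by (simp add: algebra_simps)
      moreover have "br x0 y0 + br x1 y1 \<in> E"
        using par[of x0 False y0 False] par[of x1 True y1 True] x y subspace_add[OF subE] by simp
      moreover have "br x0 y1 + br x1 y0 \<in> Od"
        using par[of x0 False y1 True] par[of x1 True y0 False] x y subspace_add[OF subO] by simp
      moreover have "br x0 y0 + br x1 y1 \<in> span G" using GD x y by (simp add: span_add)
      moreover have "br x0 y1 + br x1 y0 \<in> span G" using GD x y by (simp add: span_add)
      ultimately show "g \<in> P" unfolding P_def by blast
    qed
  next
    show "subspace P"
    proof (rule subspaceI)
      have "(0::'v) = 0 + 0" by simp
      moreover have "(0::'v) \<in> E \<inter> span G" using subspace_0[OF subE] span_zero by blast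
      moreover have "(0::'v) \<in> Od \<inter> span G" using subspace_0[OF subO] span_zero by blast
      ultimately show "0 \<in> P" unfolding P_def by blast
    next
      fix u v assume "u \<in> P" "v \<in> P"
      then obtain a b a' b' where "a \<in> E \<inter> span G" "b \<in> Od \<inter> span G" "u = a + b"
        "a' \<in> E \<inter> span G" "b' \<in> Od \<inter> span G" "v = a' + b'" unfolding P_def by blast
      moreover have "u + v = (a + a') + (b + b')" using calculation by (simp add: algebra_simps)
      ultimately show "u + v \<in> P" unfolding P_def
        using subspace_add[OF subE] subspace_add[OF subO] span_add by blast
    next
      fix c u assume "u \<in> P"
      then obtain a b where "a \<in> E \<inter> span G" "b \<in> Od \<inter> span G" "u = a + b"
        unfolding P_def by blast
      moreover have "sc c u = sc c a + sc c b" using calculation by (simp add: scale_right_distrib)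
      ultimately show "sc c u \<in> P" unfolding P_def
        using subspace_scale[OF subE] subspace_scale[OF subO] span_scale by blast
    qed
  qed
  then show ?thesis unfolding D super_ideal_def graded_subspace_def P_def
    using ideal by blast
qed

lemma solv: "super_ideal sc E Od br I \<Longrightarrow> (derived sc br ^^ n) I = {0} \<Longrightarrow> I = {0}"
proof (induction n arbitrary: I)
  case 0
  then show ?case by simp
next
  case (Suc n)
  have "(derived sc br ^^ Suc n) I = (derived sc br ^^ n) (derived sc br I)"
    by (simp only: funpow_Suc_right comp_def)
  then have "(derived sc br ^^ n) (derived sc br I) = {0}" using Suc.prems(2) by simp
  then have DI: "derived sc br I = {0}" by (rule Suc.IH[OF derived_ideal[OF Suc.prems(1)]])
  have comm: "br b a = 0" if "a \<in> I" "b \<in> I" for a b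
  proof -
    have "br b a \<in> {br x y | x y. x \<in> I \<and> y \<in> I}" using that by blast
    then have "br b a \<in> derived sc br I" unfolding derived_def by (rule span_base)
    then show ?thesis using DI by blast
  qed
  then show ?case
  proof (cases "I = {0}")
    case False
    then show ?thesis using lemma2[OF Suc.prems(1) Suc.prems(1) False] comm by blast
  qed simp
qed

end

theorem corollary2p2:
  fixes sc :: "complex \<Rightarrow> 'v::ab_group_add \<Rightarrow> 'v"
    and E Od L0 :: "'v set" and br :: "'v \<Rightarrow> 'v \<Rightarrow> 'v"
  assumes "lie_superalgebra sc E Od br"
    and "nonlinear_primitive sc E Od br L0"
  shows "semisimple sc E Od br \<and>
    \<not> (\<exists>I J. super_ideal sc E Od br I \<and> super_ideal sc E Od br J \<and>
           I \<noteq> {0} \<and> J \<noteq> {0} \<and> I \<inter> J = {0} \<and>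
           (\<forall>v. \<exists>x\<in>I. \<exists>y\<in>J. v = x + y))"
proof -
  have la: "vector_space sc" "module.subspace sc E" "module.subspace sc Od" "E \<inter> Od = {0}"
    "\<forall>v. \<exists>x\<in>E. \<exists>y\<in>Od. v = x + y"
    "\<forall>x y z. br (x + y) z = br x z + br y z"
    "\<forall>x y z. br x (y + z) = br x y + br x z"
    "\<forall>a x y. br (sc a x) y = sc a (br x y)"
    "\<forall>a x y. br x (sc a y) = sc a (br x y)"
    "\<forall>p q x y. x \<in> hom_part E Od p \<longrightarrow> y \<in> hom_part E Od q \<longrightarrow>
        br x y \<in> hom_part E Od (p \<noteq> q)"
    "\<forall>p q x y. x \<in> hom_part E Od p \<longrightarrow> y \<in> hom_part E Od q \<longrightarrow>
        br x y = - ssign p q (br y x)"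
    "\<forall>p q x y z. x \<in> hom_part E Od p \<longrightarrow> y \<in> hom_part E Od q \<longrightarrow>
        br x (br y z) = br (br x y) z + ssign p q (br y (br x z))"
    using assms(1) unfolding lie_superalgebra_def
    apply -
    apply (elim conjE, assumption)+
    done
  have np: "subalgebra sc E Od br L0"
    "\<forall>I. super_ideal sc E Od br I \<longrightarrow> I \<subseteq> L0 \<longrightarrow> I = {0}"
    "\<forall>T. subalgebra sc E Od br T \<longrightarrow> L0 \<subseteq> T \<longrightarrow> T = L0 \<or> T = UNIV"
    "isotropy_kernel br L0 \<noteq> {0}"
    using assms(2) unfolding nonlinear_primitive_def transitive_pair_def maximal_subalgebra_def
    by blast+
  interpret lsa sc E Od br L0
  proof (unfold lsa_def lsa_axioms_def, intro conjI)
    show "module sc" using la(1) by (simp add: module_iff_vector_space)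
  qed (fact la np)+
  have "semisimple sc E Od br"
    unfolding semisimple_def solvable_def using solv by blast
  moreover have "\<not> (\<exists>I J. super_ideal sc E Od br I \<and> super_ideal sc E Od br J \<and>
           I \<noteq> {0} \<and> J \<noteq> {0} \<and> I \<inter> J = {0} \<and>
           (\<forall>v. \<exists>x\<in>I. \<exists>y\<in>J. v = x + y))"
  proof
    assume "\<exists>I J. super_ideal sc E Od br I \<and> super_ideal sc E Od br J \<and>
           I \<noteq> {0} \<and> J \<noteq> {0} \<and> I \<inter> J = {0} \<and>
           (\<forall>v. \<exists>x\<in>I. \<exists>y\<in>J. v = x + y)"
    then obtain I J where h: "super_ideal sc E Od br I" "super_ideal sc E Od br J"
      "I \<noteq> {0}" "J \<noteq> {0}" "I \<inter> J = {0}" by blast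
    have "br j i = 0" if "i \<in> I" "j \<in> J" for i j
      using ideal_right[OF h(1) that(1)] ideal_left[OF h(2) that(2)] h(5) by blast
    then have "I = {0}" using lemma2[OF h(1) h(2) h(4)] by blast
    then show False using h(3) by blast
  qed
  ultimately show ?thesis by blast
qed

end
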